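(* Let $\mathcal{D}$ be a set, $\Sigma$ a finite set and $R\subseteq\mathcal{D}^\Sigma$. Suppose one of the following holds: (i) $R\neq\mathcal{D}^\Sigma$, but $\pi_\Lambda R=\mathcal{D}^\Lambda$ for every non-empty proper subset $\emptyset\subset\Lambda\subset\Sigma$; (ii) $\neg R$ is non-empty, but $\pi_{\{i\}}(\neg R)\neq\mathcal{D}$ for every $i\in\Sigma$. Then $R$ is non-degenerate.
   Context: An attributed relation is a subset $R\subseteq\mathcal{D}^\Sigma$ with $\Sigma$ a finite set of attributes; for $\Lambda\subseteq\Sigma$, $\pi_\Lambda R=\{a|_\Lambda: a\in R\}$, and $\neg R=\mathcal{D}^\Sigma\setminus R$. $R$ is a Cartesian product over a partition $\Sigma=\Lambda_1\cup\dots\cup\Lambda_m$ if there exist $R^{\Lambda_i}\subseteq\mathcal{D}^{\Lambda_i}$ with $R=\{a\in\mathcal{D}^\Sigma: a|_{\Lambda_i}\in R^{\Lambda_i}\ \forall i\}$. $R$ is degenerate if it is a Cartesian product over some partition with $m>1$ and all $\Lambda_i\neq\emptyset$; otherwise non-degenerate. *)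

theory Defs
  imports "HOL-Library.FuncSet"
begin

definition tuples :: "'d set \<Rightarrow> 'a set \<Rightarrow> ('a \<Rightarrow> 'd) set" where
  "tuples D S = PiE S (\<lambda>_. D)"

definition proj :: "'a set \<Rightarrow> ('a \<Rightarrow> 'd) set \<Rightarrow> ('a \<Rightarrow> 'd) set" where
  "proj L R = (\<lambda>a. restrict a L) ` R"

definition rel_neg :: "'d set \<Rightarrow> 'a set \<Rightarrow> ('a \<Rightarrow> 'd) set \<Rightarrow> ('a \<Rightarrow> 'd) set" where
  "rel_neg D S R = tuples D S - R"

definition is_partition :: "'a set set \<Rightarrow> 'a set \<Rightarrow> bool" where
  "is_partition P S \<longleftrightarrow> \<Union>P = S \<and> (\<forall>L1\<in>P. \<forall>L2\<in>P. L1 \<noteq> L2 \<longrightarrow> L1 \<inter> L2 = {})"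

definition cartesian_product_over ::
  "'d set \<Rightarrow> 'a set \<Rightarrow> ('a \<Rightarrow> 'd) set \<Rightarrow> 'a set set \<Rightarrow> bool" where
  "cartesian_product_over D S R P \<longleftrightarrow>
     (\<exists>RL :: 'a set \<Rightarrow> ('a \<Rightarrow> 'd) set.
        (\<forall>L\<in>P. RL L \<subseteq> tuples D L) \<and>
        R = {a \<in> tuples D S. \<forall>L\<in>P. restrict a L \<in> RL L})"

definition degenerate :: "'d set \<Rightarrow> 'a set \<Rightarrow> ('a \<Rightarrow> 'd) set \<Rightarrow> bool" where
  "degenerate D S R \<longleftrightarrow>
     (\<exists>P. is_partition P S \<and> finite P \<and> card P > 1 \<and> (\<forall>L\<in>P. L \<noteq> {}) \<and>
          cartesian_product_over D S R P)"

end

theory Submission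
  imports Defs
begin

lemma two_blocks:
  assumes "finite P" "card P > 1" "L \<in> P"
  obtains L' where "L' \<in> P" "L' \<noteq> L"
proof -
  have "P - {L} \<noteq> {}"
  proof
    assume "P - {L} = {}"
    then have "P \<subseteq> {L}" by blast
    then have "card P \<le> 1" using card_mono[of "{L}" P] by simp
    with assms show False by simp
  qed
  then show ?thesis using that by blast
qed

theorem theorem4:
  fixes D :: "'d set" and S :: "'a set" and R :: "('a \<Rightarrow> 'd) set"
  assumes "finite S"
    and "R \<subseteq> tuples D S"
    and "(R \<noteq> tuples D S \<and>
           (\<forall>L. L \<noteq> {} \<and> L \<subset> S \<longrightarrow> proj L R = tuples D L))
         \<or> (rel_neg D S R \<noteq> {} \<and>
           (\<forall>i\<in>S. proj {i} (rel_neg D S R) \<noteq> tuples D {i}))"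
  shows "\<not> degenerate D S R"
proof
  assume "degenerate D S R"
  then obtain P where part: "is_partition P S" and fP: "finite P" and cP: "card P > 1"
    and ne: "\<forall>L\<in>P. L \<noteq> {}" and cp: "cartesian_product_over D S R P"
    unfolding degenerate_def by blast
  from cp obtain RL where RLsub: "\<forall>L\<in>P. RL L \<subseteq> tuples D L"
    and Req: "R = {a \<in> tuples D S. \<forall>L\<in>P. restrict a L \<in> RL L}"
    unfolding cartesian_product_over_def by blast
  have LS: "L \<subseteq> S" if "L \<in> P" for L using part that unfolding is_partition_def by blast
  have disj: "L1 \<inter> L2 = {}" if "L1 \<in> P" "L2 \<in> P" "L1 \<noteq> L2" for L1 L2
    using part that unfolding is_partition_def by blast
  from assms(3) show False
  proof
    assume A: "R \<noteq> tuples D S \<and> (\<forall>L. L \<noteq> {} \<and> L \<subset> S \<longrightarrow> proj L R = tuples D L)"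
    have "tuples D S \<subseteq> R"
    proof
      fix a assume a: "a \<in> tuples D S"
      have "restrict a L \<in> RL L" if L: "L \<in> P" for L
      proof -
        obtain L' where L': "L' \<in> P" "L' \<noteq> L" using two_blocks[OF fP cP L] by blast
        obtain x where x: "x \<in> L'" using ne L'(1) by blast
        have "x \<in> S" "x \<notin> L" using LS[OF L'(1)] disj[OF L L'(1)] L'(2) x by auto
        then have "L \<subset> S" using LS[OF L] by blast
        moreover have "L \<noteq> {}" using ne L by blast
        ultimately have "proj L R = tuples D L" using conjunct2[OF A] by simp
        moreover have "restrict a L \<in> tuples D L"
          using a LS[OF L] unfolding tuples_def PiE_def Pi_def by auto
        moreover have "proj L R \<subseteq> RL L" unfolding proj_def Req using L by auto
        ultimately show ?thesis by blast
      qed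
      with a show "a \<in> R" unfolding Req by blast
    qed
    with A assms(2) show False by blast
  next
    assume B: "rel_neg D S R \<noteq> {} \<and> (\<forall>i\<in>S. proj {i} (rel_neg D S R) \<noteq> tuples D {i})"
    then obtain b where b: "b \<in> tuples D S" "b \<notin> R" unfolding rel_neg_def by blast
    then obtain L0 where L0: "L0 \<in> P" "restrict b L0 \<notin> RL L0" unfolding Req by blast
    obtain L1 where L1: "L1 \<in> P" "L1 \<noteq> L0" using two_blocks[OF fP cP L0(1)] by blast
    obtain i where i: "i \<in> L1" using ne L1 by blast
    have iS: "i \<in> S" using LS[OF L1(1)] i by blast
    have iL0: "i \<notin> L0" using disj[OF L0(1) L1(1)] L1(2) i by blast
    have "tuples D {i} \<subseteq> proj {i} (rel_neg D S R)"
    proof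
      fix f assume f: "f \<in> tuples D {i}"
      define b' where "b' = b(i := f i)"
      have fi: "f i \<in> D" using f unfolding tuples_def by auto
      have b't: "b' \<in> tuples D S" using b(1) fi iS unfolding b'_def tuples_def PiE_def Pi_def extensional_def by auto
      have "restrict b' L0 = restrict b L0" using iL0 unfolding b'_def restrict_def by auto
      then have "b' \<notin> R" using L0 unfolding Req by (metis (no_types, lifting) mem_Collect_eq)
      then have "b' \<in> rel_neg D S R" using b't unfolding rel_neg_def by blast
      moreover have "restrict b' {i} = f" using f unfolding b'_def tuples_def PiE_def extensional_def restrict_def by auto
      ultimately show "f \<in> proj {i} (rel_neg D S R)" unfolding proj_def by force
    qed
    moreover have "proj {i} (rel_neg D S R) \<subseteq> tuples D {i}"
      using iS unfolding proj_def rel_neg_def tuples_def PiE_def Pi_def by auto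
    ultimately show False using B iS by blast
  qed
qed

end
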